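(* Let $\mathbf H\subset GL_m(\mathbb C)$ be a finite unitary group and $\mathbf G=\mathbf H\wr\mathrm{Sym}_n$ acting on $\mathbb C^{mn}$, with the subgroup sequence, coset leaders and initial vector described in the context. Then the subgroup decoding algorithm decodes robustly.
   Context: $\mathbf G$ is the group of $mn\times mn$ block permutation matrices with nonzero $m\times m$ blocks in $\mathbf H$; elements written $\sigma(h_1,\dots,h_n)$. Subgroups: $\mathbf G_0=\{I\}$, $\mathbf G_{2l-1}=(\mathbf H\wr\mathrm{Sym}_l)\oplus\{I_{m(n-l)}\}$ ($1\le l\le n$), $\mathbf G_{2l}=(\mathbf H\wr\mathrm{Sym}_l)\oplus\mathbf H\oplus\{I_{m(n-l-1)}\}$ ($1\le l\le n-1$), so $\mathbf G_{2n-1}=\mathbf G$. Coset leaders: $\operatorname{CL}(\mathbf G_1/\mathbf G_0)=\mathbf G_1$; $\operatorname{CL}(\mathbf G_{2l}/\mathbf G_{2l-1})=\{(1,\dots,1,h,1,\dots,1):h\in\mathbf H\text{ in slot }l+1\}$; $\operatorname{CL}(\mathbf G_{2l+1}/\mathbf G_{2l})=\{(j\ j{+}1\ \cdots\ l{+}1):1\le j\le l+1\}$ (block permutation cycles). Initial vector $\mathbf x_0=(u_1\mathbf v_0,\dots,u_n\mathbf v_0)$, where $\mathbf v_0\in\mathbb C^m$ is a unit vector such that the identity is the unique $h\in\mathbf H$ minimizing $\|h\mathbf v_0-\mathbf v_0\|$, and $0<u_1<\cdots<u_n$ are reals with $\|\mathbf x_0\|=1$. $S=\operatorname{Stab}_{\mathbf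 G}(\mathbf x_0)$. Subgroup decoding algorithm: $\mathbf r_0=\mathbf r$; for $k=1,\dots,2n-1$ choose $d_k\in\operatorname{CL}(\mathbf G_k/\mathbf G_{k-1})$ minimizing $\|a\mathbf r_{k-1}-\mathbf x_0\|$ (ties broken by a fixed ordering), $\mathbf r_k=d_k\mathbf r_{k-1}$; output $d_{2n-1}\cdots d_1$. It decodes robustly if for all $g\in\mathbf G$ and $\mathbf r$ with $\|\mathbf r-g^{-1}\mathbf x_0\|<\|\mathbf r-h^{-1}\mathbf x_0\|$ for all $h\notin Sg$, the output lies in $Sg$. *)

theory Defs
  imports "Jordan_Normal_Form.Schur_Decomposition" "HOL-Combinatorics.Permutations"
begin

definition vnorm :: "complex vec \<Rightarrow> real" where
  "vnorm v = sqrt (\<Sum>i<dim_vec v. (cmod (v $ i))\<^sup>2)"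

definition matinv :: "nat \<Rightarrow> complex mat \<Rightarrow> complex mat" where
  "matinv N g = (THE g'. g' \<in> carrier_mat N N \<and> g' * g = 1\<^sub>m N \<and> g * g' = 1\<^sub>m N)"

(* sigma(h_0,...,h_{n-1}) (0-based block indices): the mn x mn block matrix whose
   block in block-row sigma c, block-column c is h_c, all other blocks zero.
   Thus block sigma(c) of (g *v x) equals h_c *v (block c of x). *)
definition blockmat :: "nat \<Rightarrow> nat \<Rightarrow> (nat \<Rightarrow> nat) \<Rightarrow> (nat \<Rightarrow> complex mat) \<Rightarrow> complex mat" where
  "blockmat m n \<sigma> hs = mat (m*n) (m*n)
     (\<lambda>(r,c). if \<sigma> (c div m) = r div m then hs (c div m) $$ (r mod m, c mod m) else 0)"

(* the wreath product G = H wr Sym_n as block permutation matrices *)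
definition Gset :: "nat \<Rightarrow> nat \<Rightarrow> complex mat set \<Rightarrow> complex mat set" where
  "Gset m n H = {blockmat m n \<sigma> hs | \<sigma> hs. \<sigma> permutes {..<n} \<and> (\<forall>j<n. hs j \<in> H)}"

definition cyc :: "nat \<Rightarrow> nat \<Rightarrow> nat \<Rightarrow> nat" where
  "cyc j l = (\<lambda>i. if j \<le> i \<and> i < l then i + 1 else if i = l then j else i)"

(* coset leaders CL(G_k / G_{k-1}), k = 1..2n-1, with 0-based block slots:
   k = 1      : G_1 = H (+) I
   k = 2l     : diag(1,..,1,h,1,..,1), h in H in (1-based) slot l+1
   k = 2l+1   : block cycles (j j+1 ... l+1) (1-based), 1 <= j <= l+1 *)
definition CL :: "nat \<Rightarrow> nat \<Rightarrow> complex mat set \<Rightarrow> nat \<Rightarrow> complex mat set" where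
  "CL m n H k =
    (if k = 1 then {blockmat m n id (\<lambda>i. if i = 0 then h else 1\<^sub>m m) | h. h \<in> H}
     else if even k then {blockmat m n id (\<lambda>i. if i = k div 2 then h else 1\<^sub>m m) | h. h \<in> H}
     else {blockmat m n (cyc j (k div 2)) (\<lambda>_. 1\<^sub>m m) | j. j \<le> k div 2})"

definition x0vec :: "nat \<Rightarrow> nat \<Rightarrow> (nat \<Rightarrow> real) \<Rightarrow> complex vec \<Rightarrow> complex vec" where
  "x0vec m n u v0 = vec (m*n) (\<lambda>i. complex_of_real (u (i div m)) * v0 $ (i mod m))"

definition pick :: "(complex mat \<Rightarrow> nat) \<Rightarrow> complex vec \<Rightarrow> complex mat set \<Rightarrow> complex vec \<Rightarrow> complex mat" where
  "pick rk x0 C r = (THE d. d \<in> C \<and> (\<forall>d'\<in>C. vnorm (d *\<^sub>v r - x0) \<le> vnorm (d' *\<^sub>v r - x0))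
      \<and> (\<forall>d'\<in>C. vnorm (d' *\<^sub>v r - x0) = vnorm (d *\<^sub>v r - x0) \<longrightarrow> rk d \<le> rk d'))"

primrec dec_run :: "nat \<Rightarrow> nat \<Rightarrow> complex mat set \<Rightarrow> (complex mat \<Rightarrow> nat) \<Rightarrow> complex vec
    \<Rightarrow> complex vec \<Rightarrow> nat \<Rightarrow> complex mat \<times> complex vec" where
  "dec_run m n H rk x0 r 0 = (1\<^sub>m (m*n), r)"
| "dec_run m n H rk x0 r (Suc k) =
     (let (P, rr) = dec_run m n H rk x0 r k;
          d = pick rk x0 (CL m n H (Suc k)) rr
      in (d * P, d *\<^sub>v rr))"

definition decode :: "nat \<Rightarrow> nat \<Rightarrow> complex mat set \<Rightarrow> (complex mat \<Rightarrow> nat) \<Rightarrow> complex vec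
    \<Rightarrow> complex vec \<Rightarrow> complex mat" where
  "decode m n H rk x0 r = fst (dec_run m n H rk x0 r (2*n - 1))"

definition Stab :: "nat \<Rightarrow> nat \<Rightarrow> complex mat set \<Rightarrow> complex vec \<Rightarrow> complex mat set" where
  "Stab m n H x0 = {s \<in> Gset m n H. s *\<^sub>v x0 = x0}"

definition decodes_robustly :: "nat \<Rightarrow> nat \<Rightarrow> complex mat set \<Rightarrow> (complex mat \<Rightarrow> nat)
    \<Rightarrow> complex vec \<Rightarrow> bool" where
  "decodes_robustly m n H rk x0 \<longleftrightarrow>
     (\<forall>g\<in>Gset m n H. \<forall>r\<in>carrier_vec (m*n).
        (\<forall>h\<in>Gset m n H. h \<notin> (\<lambda>s. s * g) ` Stab m n H x0 \<longrightarrow>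
            vnorm (r - matinv (m*n) g *\<^sub>v x0) < vnorm (r - matinv (m*n) h *\<^sub>v x0))
        \<longrightarrow> decode m n H rk x0 r \<in> (\<lambda>s. s * g) ` Stab m n H x0)"

end

theory Submission
  imports Defs
begin


lemma sum_split_add: fixes a b :: nat shows "(\<Sum>k<a+b. f k) = (\<Sum>k<a. f k) + (\<Sum>i<b. f (a+i))"
  by (induction b) (simp_all add: add.assoc)

lemma double_sum: fixes m n :: nat shows "(\<Sum>k<m*n. f k) = (\<Sum>c<n. \<Sum>i<m. f (c*m+i))"
proof (induction n)
  case 0 then show ?case by simp
next
  case (Suc n)
  have "(\<Sum>k<m*Suc n. f k) = (\<Sum>k<m*n + m. f k)" by (simp add: add.commute)
  also have "\<dots> = (\<Sum>k<m*n. f k) + (\<Sum>i<m. f (m*n+i))" by (rule sum_split_add)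
  finally show ?case using Suc by (simp add: mult.commute)
qed

lemma div_lt: "(k::nat) < m*n \<Longrightarrow> k div m < n"
  by (simp add: less_mult_imp_div_less mult.commute)

lemma block_idx_lt: assumes "b < n" "i < (m::nat)" shows "b*m+i < m*n"
proof -
  have "Suc b * m \<le> n * m" using assms(1) by (intro mult_le_mono1) simp
  then show ?thesis using assms(2) by (simp add: mult.commute)
qed

lemma block_sum: fixes b n m :: nat
  assumes "b < n" "\<forall>k<m*n. k div m \<noteq> b \<longrightarrow> f k = 0"
  shows "(\<Sum>k<m*n. f k) = (\<Sum>i<m. f (b*m+i))"
proof -
  have sub: "(\<lambda>i. b*m+i) ` {..<m} \<subseteq> {..<m*n}" using block_idx_lt[OF assms(1)] by auto
  have "(\<Sum>k<m*n. f k) = (\<Sum>k\<in>(\<lambda>i. b*m+i) ` {..<m}. f k)"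
  proof (rule sum.mono_neutral_right[OF _ sub])
    show "\<forall>i\<in>{..<m * n} - (\<lambda>i. b * m + i) ` {..<m}. f i = 0"
    proof
      fix k assume k: "k \<in> {..<m * n} - (\<lambda>i. b * m + i) ` {..<m}"
      have "k div m \<noteq> b"
      proof
        assume "k div m = b"
        then have "k = b*m + k mod m" by (metis div_mult_mod_eq)
        moreover have "m > 0" using k by (cases m) auto
        ultimately show False using k by auto
      qed
      then show "f k = 0" using assms(2) k by auto
    qed
  qed simp
  also have "\<dots> = (\<Sum>i<m. f (b*m+i))" by (subst sum.reindex) (auto simp: inj_on_def)
  finally show ?thesis .
qed

lemma blockmat_carrier[simp]: "blockmat m n \<sigma> hs \<in> carrier_mat (m*n) (m*n)"
  by (simp add: blockmat_def)

lemma blockmat_dims[simp]: "dim_row (blockmat m n \<sigma> hs) = m*n" "dim_col (blockmat m n \<sigma> hs) = m*n"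
  by (simp_all add: blockmat_def)

lemma blockmat_index:
  "r < m*n \<Longrightarrow> c < m*n \<Longrightarrow> blockmat m n \<sigma> hs $$ (r,c) =
     (if \<sigma> (c div m) = r div m then hs (c div m) $$ (r mod m, c mod m) else 0)"
  by (simp add: blockmat_def)

lemma blockmat_cong: "(\<And>c. c<n \<Longrightarrow> hs c = hs' c) \<Longrightarrow> blockmat m n \<sigma> hs = blockmat m n \<sigma> hs'"
  by (rule eq_matI) (auto simp: blockmat_index div_lt)

lemma blockmat_cong2: "(\<And>c. c<n \<Longrightarrow> \<sigma> c = \<tau> c) \<Longrightarrow> (\<And>c. c<n \<Longrightarrow> hs c = hs' c) \<Longrightarrow> blockmat m n \<sigma> hs = blockmat m n \<tau> hs'"
  by (rule eq_matI) (auto simp: blockmat_index div_lt)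

definition blk :: "nat \<Rightarrow> complex vec \<Rightarrow> nat \<Rightarrow> complex vec" where
  "blk m y c = vec m (\<lambda>i. y $ (c*m+i))"

lemma blk_carrier[simp]: "blk m y c \<in> carrier_vec m" by (simp add: blk_def)
lemma blk_dim[simp]: "dim_vec (blk m y c) = m" by (simp add: blk_def)
lemma blk_index[simp]: "i < m \<Longrightarrow> blk m y c $ i = y $ (c*m+i)" by (simp add: blk_def)

lemma mult_blk:
  assumes sig: "\<sigma> permutes {..<n}" and c: "c < n" and hs: "\<forall>c<n. hs c \<in> carrier_mat m m"
    and y: "y \<in> carrier_vec (m*n)"
  shows "blk m (blockmat m n \<sigma> hs *\<^sub>v y) (\<sigma> c) = hs c *\<^sub>v blk m y c"
proof (rule eq_vecI)
  have hc: "hs c \<in> carrier_mat m m" using hs c by auto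
  show "dim_vec (blk m (blockmat m n \<sigma> hs *\<^sub>v y) (\<sigma> c)) = dim_vec (hs c *\<^sub>v blk m y c)"
    using hc by simp
  fix i assume "i < dim_vec (hs c *\<^sub>v blk m y c)"
  then have i: "i < m" using hc by simp
  have m0: "m > 0" using i by simp
  have sc: "\<sigma> c < n" using sig c by (metis lessThan_iff permutes_in_image)
  have row: "\<sigma> c * m + i < m*n" using block_idx_lt[OF sc i] .
  have inj: "inj \<sigma>" using sig by (simp add: permutes_inj)
  have "blk m (blockmat m n \<sigma> hs *\<^sub>v y) (\<sigma> c) $ i = (\<Sum>k<m*n. blockmat m n \<sigma> hs $$ (\<sigma> c * m + i, k) * y $ k)"
    using i row y by (simp add: scalar_prod_def lessThan_atLeast0)
  also have "\<dots> = (\<Sum>i'<m. blockmat m n \<sigma> hs $$ (\<sigma> c * m + i, c*m+i') * y $ (c*m+i'))"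
  proof (rule block_sum[OF c], intro allI impI)
    fix k assume k: "k < m*n" "k div m \<noteq> c"
    then have "\<sigma> (k div m) \<noteq> \<sigma> c" using inj by (auto dest: injD)
    then show "blockmat m n \<sigma> hs $$ (\<sigma> c * m + i, k) * y $ k = 0"
      using k row i m0 by (simp add: blockmat_index)
  qed
  also have "\<dots> = (\<Sum>i'<m. hs c $$ (i, i') * blk m y c $ i')"
    using i m0 row block_idx_lt[OF c] by (intro sum.cong) (auto simp: blockmat_index)
  also have "\<dots> = (hs c *\<^sub>v blk m y c) $ i"
    using i hc by (simp add: scalar_prod_def lessThan_atLeast0)
  finally show "blk m (blockmat m n \<sigma> hs *\<^sub>v y) (\<sigma> c) $ i = (hs c *\<^sub>v blk m y c) $ i" .
qed



lemma blockmat_mult: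
  assumes sig: "\<sigma> permutes {..<n}"
    and hs: "\<forall>c<n. hs c \<in> carrier_mat m m" and ks: "\<forall>c<n. ks c \<in> carrier_mat m m"
  shows "blockmat m n \<tau> ks * blockmat m n \<sigma> hs = blockmat m n (\<tau> \<circ> \<sigma>) (\<lambda>c. ks (\<sigma> c) * hs c)"
proof (rule eq_matI)
  fix i j assume "i < dim_row (blockmat m n (\<tau> \<circ> \<sigma>) (\<lambda>c. ks (\<sigma> c) * hs c))"
    "j < dim_col (blockmat m n (\<tau> \<circ> \<sigma>) (\<lambda>c. ks (\<sigma> c) * hs c))"
  then have i: "i < m*n" and j: "j < m*n" by auto
  define c where "c = j div m"
  define b where "b = \<sigma> c"
  have c: "c < n" unfolding c_def using j by (rule div_lt)
  have b: "b < n" unfolding b_def using sig c by (metis lessThan_iff permutes_in_image)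
  have m0: "m > 0" using j by (cases m) auto
  have hc: "hs c \<in> carrier_mat m m" and kb: "ks b \<in> carrier_mat m m" using hs ks b c by auto
  have "(blockmat m n \<tau> ks * blockmat m n \<sigma> hs) $$ (i,j) =
        (\<Sum>k<m*n. blockmat m n \<tau> ks $$ (i,k) * blockmat m n \<sigma> hs $$ (k,j))"
    using i j by (simp add: scalar_prod_def lessThan_atLeast0)
  also have "\<dots> = (\<Sum>i'<m. blockmat m n \<tau> ks $$ (i,b*m+i') * blockmat m n \<sigma> hs $$ (b*m+i',j))"
    by (rule block_sum[OF b]) (auto simp: blockmat_index j b_def c_def)
  also have "\<dots> = (\<Sum>i'<m. (if \<tau> b = i div m then ks b $$ (i mod m, i') else 0) * hs c $$ (i', j mod m))"
    using block_idx_lt[OF b] i j m0 by (intro sum.cong) (auto simp: blockmat_index b_def c_def)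
  also have "\<dots> = (if \<tau> b = i div m then (\<Sum>i'<m. ks b $$ (i mod m, i') * hs c $$ (i', j mod m)) else 0)"
    by auto
  also have "\<dots> = (if \<tau> b = i div m then (ks b * hs c) $$ (i mod m, j mod m) else 0)"
    using hc kb m0 by (auto simp: scalar_prod_def lessThan_atLeast0)
  also have "\<dots> = blockmat m n (\<tau> \<circ> \<sigma>) (\<lambda>c. ks (\<sigma> c) * hs c) $$ (i,j)"
    using i j by (simp add: blockmat_index b_def c_def)
  finally show "(blockmat m n \<tau> ks * blockmat m n \<sigma> hs) $$ (i,j) = blockmat m n (\<tau> \<circ> \<sigma>) (\<lambda>c. ks (\<sigma> c) * hs c) $$ (i,j)" .
qed auto

lemma blockmat_one: "blockmat m n id (\<lambda>_. 1\<^sub>m m) = 1\<^sub>m (m*n)"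
proof (rule eq_matI)
  fix i j assume "i < dim_row (1\<^sub>m (m * n))" "j < dim_col (1\<^sub>m (m * n))"
  then have i: "i < m*n" and j: "j < m*n" by auto
  have m0: "m > 0" using j by (cases m) auto
  have "(i = j) = (i div m = j div m \<and> i mod m = j mod m)" by (metis div_mult_mod_eq)
  then show "blockmat m n id (\<lambda>_. 1\<^sub>m m) $$ (i, j) = 1\<^sub>m (m * n) $$ (i, j)"
    using i j m0 by (auto simp: blockmat_index)
qed auto

lemma adjoint_dims[simp]: "dim_row (mat_adjoint A) = dim_col A" "dim_col (mat_adjoint A) = dim_row A"
  by (simp_all add: mat_adjoint_def)

lemma adjoint_index: "i < dim_col A \<Longrightarrow> j < dim_row A \<Longrightarrow> mat_adjoint (A::complex mat) $$ (i,j) = cnj (A $$ (j,i))"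
  by (simp add: mat_adjoint_def mat_of_rows_index)

lemma adjoint_carrier: "A \<in> carrier_mat a b \<Longrightarrow> mat_adjoint A \<in> carrier_mat b a"
  by auto

lemma blockmat_adjoint:
  assumes sig: "\<sigma> permutes {..<n}" and hs: "\<forall>c<n. hs c \<in> carrier_mat m m"
  shows "mat_adjoint (blockmat m n \<sigma> hs) = blockmat m n (inv_into UNIV \<sigma>) (\<lambda>p. mat_adjoint (hs (inv_into UNIV \<sigma> p)))"
proof (rule eq_matI)
  fix i j assume "i < dim_row (blockmat m n (inv_into UNIV \<sigma>) (\<lambda>p. mat_adjoint (hs (inv_into UNIV \<sigma> p))))"
    "j < dim_col (blockmat m n (inv_into UNIV \<sigma>) (\<lambda>p. mat_adjoint (hs (inv_into UNIV \<sigma> p))))"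
  then have i: "i < m*n" and j: "j < m*n" by auto
  have m0: "m > 0" using j by (cases m) auto
  have id: "(inv_into UNIV \<sigma> (j div m) = i div m) = (\<sigma> (i div m) = j div m)"
    using sig by (metis permutes_inverses(1) permutes_inverses(2))
  have hi: "hs (i div m) \<in> carrier_mat m m" using hs div_lt[OF i] by auto
  show "mat_adjoint (blockmat m n \<sigma> hs) $$ (i, j) = blockmat m n (inv_into UNIV \<sigma>) (\<lambda>p. mat_adjoint (hs (inv_into UNIV \<sigma> p))) $$ (i, j)"
  proof (cases "\<sigma> (i div m) = j div m")
    case True
    then have e: "inv_into UNIV \<sigma> (j div m) = i div m" using id by simp
    show ?thesis using i j m0 hi True by (simp add: blockmat_index adjoint_index e)
  next
    case False
    then show ?thesis using i j m0 hi by (simp add: blockmat_index adjoint_index id)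
  qed
qed auto

lemma unitary_norm:
  fixes A :: "complex mat"
  assumes A: "A \<in> carrier_mat N N" and u: "mat_adjoint A * A = 1\<^sub>m N" and v: "v \<in> carrier_vec N"
  shows "vnorm (A *\<^sub>v v) = vnorm v"
proof -
  have delta: "(\<Sum>i<N. cnj (A $$ (i,k)) * A $$ (i,j)) = (if k = j then 1 else 0)" if "k < N" "j < N" for k j
  proof -
    have "(mat_adjoint A * A) $$ (k,j) = (\<Sum>i<N. cnj (A $$ (i,k)) * A $$ (i,j))"
      using A that by (simp add: scalar_prod_def lessThan_atLeast0 adjoint_index)
    then show ?thesis using u that by simp
  qed
  have "complex_of_real (\<Sum>i<N. (cmod ((A *\<^sub>v v) $ i))\<^sup>2)
      = (\<Sum>i<N. (A *\<^sub>v v) $ i * cnj ((A *\<^sub>v v) $ i))"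
    by (simp only: of_real_sum complex_norm_square)
  also have "\<dots> = (\<Sum>i<N. (\<Sum>j<N. A $$ (i,j) * v $ j) * (\<Sum>k<N. cnj (A $$ (i,k)) * cnj (v $ k)))"
    using A v by (intro sum.cong refl) (simp add: scalar_prod_def lessThan_atLeast0 cnj_sum)
  also have "\<dots> = (\<Sum>i<N. \<Sum>k<N. \<Sum>j<N. (v $ j * cnj (v $ k)) * (cnj (A $$ (i,k)) * A $$ (i,j)))"
    by (simp add: sum_product sum_distrib_left mult_ac)
  also have "\<dots> = (\<Sum>i<N. \<Sum>j<N. \<Sum>k<N. (v $ j * cnj (v $ k)) * (cnj (A $$ (i,k)) * A $$ (i,j)))"
    by (rule sum.cong[OF refl], rule sum.swap)
  also have "\<dots> = (\<Sum>j<N. \<Sum>i<N. \<Sum>k<N. (v $ j * cnj (v $ k)) * (cnj (A $$ (i,k)) * A $$ (i,j)))"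
    by (rule sum.swap)
  also have "\<dots> = (\<Sum>j<N. \<Sum>k<N. \<Sum>i<N. (v $ j * cnj (v $ k)) * (cnj (A $$ (i,k)) * A $$ (i,j)))"
    by (rule sum.cong[OF refl], rule sum.swap)
  also have "\<dots> = (\<Sum>j<N. \<Sum>k<N. (v $ j * cnj (v $ k)) * (\<Sum>i<N. cnj (A $$ (i,k)) * A $$ (i,j)))"
    by (simp add: sum_distrib_left)
  also have "\<dots> = (\<Sum>j<N. \<Sum>k<N. (v $ j * cnj (v $ k)) * (if k = j then 1 else 0))"
    by (intro sum.cong refl) (simp add: delta)
  also have "\<dots> = (\<Sum>j<N. v $ j * cnj (v $ j))"
    by (simp add: if_distrib cong: if_cong)
  also have "\<dots> = complex_of_real (\<Sum>i<N. (cmod (v $ i))\<^sup>2)"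
    by (simp only: of_real_sum complex_norm_square)
  finally have "(\<Sum>i<N. (cmod ((A *\<^sub>v v) $ i))\<^sup>2) = (\<Sum>i<N. (cmod (v $ i))\<^sup>2)"
    using of_real_eq_iff by blast
  then show ?thesis using A v by (simp add: vnorm_def)
qed



locale ctx =
  fixes m n :: nat and H :: "complex mat set" and v0 :: "complex vec"
    and u :: "nat \<Rightarrow> real" and rk :: "complex mat \<Rightarrow> nat"
  assumes m1: "m \<ge> 1" and n1: "n \<ge> 1"
    and finH: "finite H" and Hcar: "H \<subseteq> carrier_mat m m"
    and oneH: "1\<^sub>m m \<in> H"
    and mulH: "\<forall>a\<in>H. \<forall>b\<in>H. a * b \<in> H"
    and invH: "\<forall>a\<in>H. \<exists>b\<in>H. a * b = 1\<^sub>m m \<and> b * a = 1\<^sub>m m"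
    and unitH: "\<forall>h\<in>H. h * mat_adjoint h = 1\<^sub>m m"
    and v0c: "v0 \<in> carrier_vec m"
    and u0: "0 < u 0" and umono: "\<forall>i j. i < j \<and> j < n \<longrightarrow> u i < u j"
    and rkinj: "inj_on rk (Gset m n H)"
begin

abbreviation "G \<equiv> Gset m n H"

lemma Hc: "h \<in> H \<Longrightarrow> h \<in> carrier_mat m m" using Hcar by auto

lemma adjH: assumes h: "h \<in> H" shows "mat_adjoint h \<in> H" "mat_adjoint h * h = 1\<^sub>m m"
proof -
  obtain b where b: "b \<in> H" "h * b = 1\<^sub>m m" "b * h = 1\<^sub>m m" using invH h by blast
  have hc: "h \<in> carrier_mat m m" and bc: "b \<in> carrier_mat m m" using Hc h b by auto
  have ac: "mat_adjoint h \<in> carrier_mat m m" using hc by auto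
  have "b = b * (h * mat_adjoint h)" using unitH h bc by simp
  also have "\<dots> = (b * h) * mat_adjoint h" using bc hc ac by (simp add: assoc_mult_mat)
  also have "\<dots> = mat_adjoint h" using b(3) left_mult_one_mat[OF ac] by simp
  finally have e: "b = mat_adjoint h" .
  show "mat_adjoint h \<in> H" "mat_adjoint h * h = 1\<^sub>m m" using e b by auto
qed

lemma u_mono: "i \<le> j \<Longrightarrow> j < n \<Longrightarrow> u i \<le> u j"
  using umono by (cases "i = j") (auto simp: less_le)

lemma u_pos: "c < n \<Longrightarrow> 0 < u c"
  using u0 u_mono[of 0 c] by auto

lemma GE: "Q \<in> G \<Longrightarrow> \<exists>\<sigma> hs. Q = blockmat m n \<sigma> hs \<and> \<sigma> permutes {..<n} \<and> (\<forall>j<n. hs j \<in> H)"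
  by (auto simp: Gset_def)

lemma GI: "\<sigma> permutes {..<n} \<Longrightarrow> (\<forall>j<n. hs j \<in> H) \<Longrightarrow> blockmat m n \<sigma> hs \<in> G"
  by (auto simp: Gset_def)

lemma G_carrier: "Q \<in> G \<Longrightarrow> Q \<in> carrier_mat (m*n) (m*n)"
  by (auto simp: Gset_def)

lemma G_mult: assumes "Q1 \<in> G" "Q2 \<in> G" shows "Q1 * Q2 \<in> G"
proof -
  obtain \<tau> ks where 1: "Q1 = blockmat m n \<tau> ks" "\<tau> permutes {..<n}" "\<forall>j<n. ks j \<in> H" using GE assms(1) by blast
  obtain \<sigma> hs where 2: "Q2 = blockmat m n \<sigma> hs" "\<sigma> permutes {..<n}" "\<forall>j<n. hs j \<in> H" using GE assms(2) by blast
  have "Q1 * Q2 = blockmat m n (\<tau> \<circ> \<sigma>) (\<lambda>c. ks (\<sigma> c) * hs c)"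
    unfolding 1 2 by (rule blockmat_mult) (use 1 2 Hc in auto)
  moreover have "\<forall>c<n. ks (\<sigma> c) * hs c \<in> H"
  proof (intro allI impI)
    fix c assume c: "c < n"
    then have "\<sigma> c < n" using 2(2) by (metis lessThan_iff permutes_in_image)
    then show "ks (\<sigma> c) * hs c \<in> H" using 1(3) 2(3) c mulH by blast
  qed
  moreover have "\<tau> \<circ> \<sigma> permutes {..<n}" using 2(2) 1(2) by (rule permutes_compose)
  ultimately show ?thesis using GI by simp
qed

lemma G_adj_unit: assumes "Q \<in> G"
  shows "mat_adjoint Q \<in> G" "mat_adjoint Q * Q = 1\<^sub>m (m*n)" "Q * mat_adjoint Q = 1\<^sub>m (m*n)"
proof -
  obtain \<sigma> hs where 1: "Q = blockmat m n \<sigma> hs" "\<sigma> permutes {..<n}" "\<forall>j<n. hs j \<in> H" using GE assms by blast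
  let ?i = "inv_into UNIV \<sigma>"
  have ip: "?i permutes {..<n}" using 1 permutes_inv by blast
  have iin: "\<And>p. p < n \<Longrightarrow> ?i p < n" using ip by (metis lessThan_iff permutes_in_image)
  have sin: "\<And>p. p < n \<Longrightarrow> \<sigma> p < n" using 1 by (metis lessThan_iff permutes_in_image)
  define hs' where "hs' = (\<lambda>p. mat_adjoint (hs (?i p)))"
  have adj: "mat_adjoint Q = blockmat m n ?i hs'"
    unfolding 1 hs'_def by (rule blockmat_adjoint) (use 1 Hc in auto)
  have hs'H: "\<forall>p<n. hs' p \<in> H" using 1 iin adjH unfolding hs'_def by auto
  show "mat_adjoint Q \<in> G" unfolding adj using GI ip hs'H by blast
  have "blockmat m n ?i hs' * blockmat m n \<sigma> hs = blockmat m n (?i \<circ> \<sigma>) (\<lambda>c. hs' (\<sigma> c) * hs c)"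
    by (rule blockmat_mult) (use 1 hs'H Hc in auto)
  then have "mat_adjoint Q * Q = blockmat m n (?i \<circ> \<sigma>) (\<lambda>c. hs' (\<sigma> c) * hs c)"
    using adj 1(1) by simp
  also have "\<dots> = blockmat m n id (\<lambda>_. 1\<^sub>m m)"
  proof (rule blockmat_cong2)
    show "\<And>c. c < n \<Longrightarrow> (?i \<circ> \<sigma>) c = id c" using 1 by (simp add: permutes_inverses)
    show "\<And>c. c < n \<Longrightarrow> hs' (\<sigma> c) * hs c = 1\<^sub>m m"
      using 1 adjH unfolding hs'_def by (simp add: permutes_inverses)
  qed
  finally show "mat_adjoint Q * Q = 1\<^sub>m (m*n)" by (simp add: blockmat_one)
  have "blockmat m n \<sigma> hs * blockmat m n ?i hs' = blockmat m n (\<sigma> \<circ> ?i) (\<lambda>c. hs (?i c) * hs' c)"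
    by (rule blockmat_mult) (use 1 hs'H Hc ip in auto)
  then have "Q * mat_adjoint Q = blockmat m n (\<sigma> \<circ> ?i) (\<lambda>c. hs (?i c) * hs' c)"
    using adj 1(1) by simp
  also have "\<dots> = blockmat m n id (\<lambda>_. 1\<^sub>m m)"
  proof (rule blockmat_cong2)
    show "\<And>c. c < n \<Longrightarrow> (\<sigma> \<circ> ?i) c = id c" using 1 by (simp add: permutes_inverses)
    show "\<And>c. c < n \<Longrightarrow> hs (?i c) * hs' c = 1\<^sub>m m"
      using 1 unitH iin unfolding hs'_def by simp
  qed
  finally show "Q * mat_adjoint Q = 1\<^sub>m (m*n)" by (simp add: blockmat_one)
qed

lemma G_matinv: assumes Q: "Q \<in> G" shows "matinv (m*n) Q = mat_adjoint Q"
  unfolding matinv_def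
proof (rule the_equality)
  have Qc: "Q \<in> carrier_mat (m*n) (m*n)" using G_carrier Q .
  show "mat_adjoint Q \<in> carrier_mat (m * n) (m * n) \<and> mat_adjoint Q * Q = 1\<^sub>m (m * n) \<and> Q * mat_adjoint Q = 1\<^sub>m (m * n)"
    using G_adj_unit[OF Q] Qc by auto
  fix g' assume g': "g' \<in> carrier_mat (m * n) (m * n) \<and> g' * Q = 1\<^sub>m (m * n) \<and> Q * g' = 1\<^sub>m (m * n)"
  have ac: "mat_adjoint Q \<in> carrier_mat (m*n) (m*n)" using Qc by auto
  have "g' = g' * (Q * mat_adjoint Q)" using G_adj_unit(3)[OF Q] right_mult_one_mat g' by metis
  also have "\<dots> = (g' * Q) * mat_adjoint Q" by (rule assoc_mult_mat[symmetric]) (use g' Qc ac in auto)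
  also have "\<dots> = mat_adjoint Q" using g' left_mult_one_mat[OF ac] by simp
  finally show "g' = mat_adjoint Q" .
qed

lemma G_norm: "Q \<in> G \<Longrightarrow> y \<in> carrier_vec (m*n) \<Longrightarrow> vnorm (Q *\<^sub>v y) = vnorm y"
  using unitary_norm G_carrier G_adj_unit by blast

end


lemma cmod_diff_sq: "(cmod (a - b))\<^sup>2 = (cmod a)\<^sup>2 - 2 * Re (a * cnj b) + (cmod b)\<^sup>2"
  unfolding cmod_power2 by (simp add: power2_diff algebra_simps)

lemma vnorm_sq: "(vnorm y)\<^sup>2 = (\<Sum>k<dim_vec y. (cmod (y $ k))\<^sup>2)"
  by (simp add: vnorm_def sum_nonneg)

lemma cyc_inj: "j \<le> l \<Longrightarrow> inj (cyc j l)"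
  by (rule injI) (auto simp: cyc_def split: if_splits)

lemma cyc_permutes: assumes "j \<le> l" "l < n" shows "cyc j l permutes {..<n}"
proof (rule bij_imp_permutes)
  have sub: "cyc j l ` {..<n} \<subseteq> {..<n}" using assms by (auto simp: cyc_def)
  have inj: "inj_on (cyc j l) {..<n}" using cyc_inj[OF assms(1)] by (rule inj_on_subset) simp
  have "cyc j l ` {..<n} = {..<n}" by (rule endo_inj_surj[OF _ sub inj]) simp
  then show "bij_betw (cyc j l) {..<n} {..<n}" using inj by (simp add: bij_betw_def)
  show "\<And>x. x \<notin> {..<n} \<Longrightarrow> cyc j l x = x" using assms by (auto simp: cyc_def)
qed

lemma cyc_le: "p \<le> l \<Longrightarrow> j \<le> l \<Longrightarrow> cyc j l p \<le> l"
  by (auto simp: cyc_def)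

lemma cyc_surj: assumes "i \<le> l" "j \<le> l" shows "\<exists>p\<le>l. cyc j l p = i"
proof (cases "i < j")
  case True then show ?thesis using assms by (intro exI[of _ i]) (auto simp: cyc_def)
next
  case False
  show ?thesis
  proof (cases "i = j")
    case True then show ?thesis using assms by (intro exI[of _ l]) (auto simp: cyc_def)
  next
    case False
    then show ?thesis using \<open>\<not> i < j\<close> assms by (intro exI[of _ "i - 1"]) (auto simp: cyc_def)
  qed
qed

context ctx begin

abbreviation "x0 \<equiv> x0vec m n u v0"

definition sc :: "complex vec \<Rightarrow> real" where
  "sc y = (\<Sum>k<m*n. Re (y $ k * cnj (x0 $ k)))"

definition ipr :: "complex vec \<Rightarrow> real" where
  "ipr a = Re (\<Sum>i<m. a $ i * cnj (v0 $ i))"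

lemma x0_carrier: "x0 \<in> carrier_vec (m*n)" by (simp add: x0vec_def)

lemma x0_idx: "c < n \<Longrightarrow> i < m \<Longrightarrow> x0 $ (c*m+i) = complex_of_real (u c) * v0 $ i"
  using block_idx_lt[of c n i m] by (simp add: x0vec_def)

lemma dist_formula: assumes y: "y \<in> carrier_vec (m*n)"
  shows "(vnorm (y - x0))\<^sup>2 = (vnorm y)\<^sup>2 - 2 * sc y + (vnorm x0)\<^sup>2"
proof -
  have "(vnorm (y - x0))\<^sup>2 = (\<Sum>k<m*n. (cmod (y $ k - x0 $ k))\<^sup>2)"
    using y x0_carrier by (simp add: vnorm_sq)
  also have "\<dots> = (\<Sum>k<m*n. (cmod (y $ k))\<^sup>2 - 2 * Re (y $ k * cnj (x0 $ k)) + (cmod (x0 $ k))\<^sup>2)"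
    by (simp add: cmod_diff_sq)
  also have "\<dots> = (\<Sum>k<m*n. (cmod (y $ k))\<^sup>2) - 2 * sc y + (\<Sum>k<m*n. (cmod (x0 $ k))\<^sup>2)"
    by (simp add: sum.distrib sum_subtractf sum_distrib_left sc_def)
  also have "\<dots> = (vnorm y)\<^sup>2 - 2 * sc y + (vnorm x0)\<^sup>2"
    using y x0_carrier by (simp add: vnorm_sq)
  finally show ?thesis .
qed

lemma sc_blocks: assumes y: "y \<in> carrier_vec (m*n)"
  shows "sc y = (\<Sum>c<n. u c * ipr (blk m y c))"
proof -
  have "sc y = (\<Sum>c<n. \<Sum>i<m. Re (y $ (c*m+i) * cnj (x0 $ (c*m+i))))"
    unfolding sc_def by (rule double_sum)
  also have "\<dots> = (\<Sum>c<n. \<Sum>i<m. u c * Re (blk m y c $ i * cnj (v0 $ i)))"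
    by (intro sum.cong refl) (simp add: x0_idx mult.left_commute)
  also have "\<dots> = (\<Sum>c<n. u c * ipr (blk m y c))"
    by (simp only: ipr_def Re_sum sum_distrib_left)
  finally show ?thesis .
qed

lemma sc_blockmat:
  assumes sig: "\<sigma> permutes {..<n}" and hs: "\<forall>c<n. hs c \<in> carrier_mat m m"
    and y: "y \<in> carrier_vec (m*n)"
  shows "sc (blockmat m n \<sigma> hs *\<^sub>v y) = (\<Sum>c<n. u (\<sigma> c) * ipr (hs c *\<^sub>v blk m y c))"
proof -
  have "sc (blockmat m n \<sigma> hs *\<^sub>v y) = (\<Sum>p<n. u p * ipr (blk m (blockmat m n \<sigma> hs *\<^sub>v y) p))"
    by (rule sc_blocks, rule mult_mat_vec_carrier[OF blockmat_carrier y])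
  also have "\<dots> = (\<Sum>c<n. u (\<sigma> c) * ipr (blk m (blockmat m n \<sigma> hs *\<^sub>v y) (\<sigma> c)))"
    using sum.reindex_bij_betw[OF permutes_imp_bij[OF sig], of "\<lambda>p. u p * ipr (blk m (blockmat m n \<sigma> hs *\<^sub>v y) p)"]
    by simp
  also have "\<dots> = (\<Sum>c<n. u (\<sigma> c) * ipr (hs c *\<^sub>v blk m y c))"
    using mult_blk[OF sig _ hs y] by simp
  finally show ?thesis .
qed

lemma vnorm_nonneg: "0 \<le> vnorm v" by (simp add: vnorm_def sum_nonneg)

lemma pick_props:
  assumes fin: "finite C" and ne: "C \<noteq> {}" and sub: "C \<subseteq> G" and y: "y \<in> carrier_vec (m*n)"
  shows "pick rk x0 C y \<in> C" "\<forall>d'\<in>C. sc (d' *\<^sub>v y) \<le> sc (pick rk x0 C y *\<^sub>v y)"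
proof -
  define f where "f d = vnorm (d *\<^sub>v y - x0)" for d
  define P where "P d = (d \<in> C \<and> (\<forall>d'\<in>C. f d \<le> f d') \<and> (\<forall>d'\<in>C. f d' = f d \<longrightarrow> rk d \<le> rk d'))" for d
  define v where "v = Min (f ` C)"
  define M where "M = {d\<in>C. f d = v}"
  have vin: "v \<in> f ` C" unfolding v_def by (rule Min_in) (use fin ne in auto)
  have vle: "v \<le> f d" if "d \<in> C" for d unfolding v_def by (rule Min_le) (use fin that in auto)
  have Mfin: "finite M" unfolding M_def using fin by simp
  have Mne: "M \<noteq> {}" using vin unfolding M_def by auto
  define w where "w = Min (rk ` M)"
  have "w \<in> rk ` M" unfolding w_def by (rule Min_in) (use Mfin Mne in auto)
  then obtain d0 where d0: "d0 \<in> M" "rk d0 = w" by auto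
  have "P d0"
  proof -
    have a: "d0 \<in> C" "f d0 = v" using d0(1) unfolding M_def by auto
    have b: "\<forall>d'\<in>C. f d0 \<le> f d'" using a(2) vle by simp
    have c: "\<forall>d'\<in>C. f d' = f d0 \<longrightarrow> rk d0 \<le> rk d'"
    proof (intro ballI impI)
      fix d' assume "d' \<in> C" "f d' = f d0"
      then have "d' \<in> M" using a unfolding M_def by simp
      then have "rk d' \<in> rk ` M" by simp
      then have "w \<le> rk d'" unfolding w_def by (rule Min_le[rotated]) (use Mfin in simp)
      then show "rk d0 \<le> rk d'" using d0(2) by simp
    qed
    show ?thesis unfolding P_def using a b c by blast
  qed
  moreover have "d1 = d2" if p1: "P d1" and p2: "P d2" for d1 d2
  proof -
    have c1: "d1 \<in> C" and c2: "d2 \<in> C" using p1 p2 unfolding P_def by auto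
    have "f d1 \<le> f d2" using p1 c2 unfolding P_def by auto
    moreover have "f d2 \<le> f d1" using p2 c1 unfolding P_def by auto
    ultimately have fe: "f d1 = f d2" by simp
    have "rk d1 \<le> rk d2" using p1 c2 fe unfolding P_def by auto
    moreover have "rk d2 \<le> rk d1" using p2 c1 fe unfolding P_def by auto
    ultimately have "rk d1 = rk d2" by simp
    moreover have "d1 \<in> G" "d2 \<in> G" using c1 c2 sub by auto
    ultimately show ?thesis using rkinj by (simp add: inj_on_def)
  qed
  ultimately have ex: "\<exists>!d. P d" by blast
  have pe: "pick rk x0 C y = (THE d. P d)" unfolding pick_def P_def f_def by simp
  have Pp: "P (pick rk x0 C y)" unfolding pe using theI'[OF ex] .
  then show "pick rk x0 C y \<in> C" unfolding P_def by simp
  show "\<forall>d'\<in>C. sc (d' *\<^sub>v y) \<le> sc (pick rk x0 C y *\<^sub>v y)"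
  proof
    fix d' assume d': "d' \<in> C"
    define d where "d = pick rk x0 C y"
    have Pd: "P d" using Pp unfolding d_def .
    have dG: "d \<in> G" "d' \<in> G" using Pd d' sub unfolding P_def by auto
    have c1: "d *\<^sub>v y \<in> carrier_vec (m*n)" using G_carrier[OF dG(1)] y by simp
    have c2: "d' *\<^sub>v y \<in> carrier_vec (m*n)" using G_carrier[OF dG(2)] y by simp
    have "f d \<le> f d'" using Pd d' unfolding P_def by auto
    then have "(f d)\<^sup>2 \<le> (f d')\<^sup>2" by (rule power_mono) (simp add: f_def vnorm_nonneg)
    then have "(vnorm (d *\<^sub>v y - x0))\<^sup>2 \<le> (vnorm (d' *\<^sub>v y - x0))\<^sup>2" unfolding f_def .
    then have "(vnorm (d *\<^sub>v y))\<^sup>2 - 2 * sc (d *\<^sub>v y) \<le> (vnorm (d' *\<^sub>v y))\<^sup>2 - 2 * sc (d' *\<^sub>v y)"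
      unfolding dist_formula[OF c1] dist_formula[OF c2] by simp
    then have "sc (d' *\<^sub>v y) \<le> sc (d *\<^sub>v y)"
      using G_norm[OF dG(1) y] G_norm[OF dG(2) y] by simp
    then show "sc (d' *\<^sub>v y) \<le> sc (pick rk x0 C y *\<^sub>v y)" unfolding d_def .
  qed
qed

lemma CL_slot: "k = 1 \<or> even k \<Longrightarrow> CL m n H k = {blockmat m n id (\<lambda>i. if i = k div 2 then h else 1\<^sub>m m) | h. h \<in> H}"
  by (cases "k = 1") (simp_all add: CL_def)

lemma CL_cyc: "odd k \<Longrightarrow> k \<noteq> 1 \<Longrightarrow> CL m n H k = {blockmat m n (cyc j (k div 2)) (\<lambda>_. 1\<^sub>m m) | j. j \<le> k div 2}"
  unfolding CL_def by simp

lemma CL_props: assumes "1 \<le> k" "k \<le> 2*n - 1"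
  shows "CL m n H k \<subseteq> G" "finite (CL m n H k)" "CL m n H k \<noteq> {}"
proof -
  have l: "k div 2 < n" using assms by auto
  have idp: "id permutes {..<n}" by (rule permutes_id)
  show "CL m n H k \<subseteq> G"
  proof (cases "k = 1 \<or> even k")
    case True
    show ?thesis unfolding CL_slot[OF True] using GI[OF idp] oneH by auto
  next
    case False
    then have e: "CL m n H k = {blockmat m n (cyc j (k div 2)) (\<lambda>_. 1\<^sub>m m) | j. j \<le> k div 2}"
      using CL_cyc by auto
    show ?thesis unfolding e using GI cyc_permutes l oneH by auto
  qed
  show "finite (CL m n H k)"
  proof (cases "k = 1 \<or> even k")
    case True
    show ?thesis unfolding CL_slot[OF True] using finH by (simp add: Setcompr_eq_image)
  next
    case False
    then have e: "CL m n H k = {blockmat m n (cyc j (k div 2)) (\<lambda>_. 1\<^sub>m m) | j. j \<le> k div 2}"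
      using CL_cyc by auto
    show ?thesis unfolding e by (simp add: Setcompr_eq_image)
  qed
  show "CL m n H k \<noteq> {}"
  proof (cases "k = 1 \<or> even k")
    case True
    show ?thesis unfolding CL_slot[OF True] using oneH by auto
  next
    case False
    then have e: "CL m n H k = {blockmat m n (cyc j (k div 2)) (\<lambda>_. 1\<^sub>m m) | j. j \<le> k div 2}"
      using CL_cyc by auto
    show ?thesis unfolding e by auto
  qed
qed

lemma one_G: "1\<^sub>m (m*n) \<in> G"
  using GI[OF permutes_id, of "\<lambda>_. 1\<^sub>m m"] oneH by (simp add: blockmat_one)

abbreviation "run r k \<equiv> dec_run m n H rk x0 r k"

lemma run_step: "run r (Suc k) = (pick rk x0 (CL m n H (Suc k)) (snd (run r k)) * fst (run r k),
   pick rk x0 (CL m n H (Suc k)) (snd (run r k)) *\<^sub>v snd (run r k))"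
  by (simp add: case_prod_unfold Let_def)

lemma run_G: assumes r: "r \<in> carrier_vec (m*n)"
  shows "k \<le> 2*n - 1 \<Longrightarrow> fst (run r k) \<in> G \<and> snd (run r k) = fst (run r k) *\<^sub>v r"
proof (induction k)
  case 0 then show ?case using one_G r by simp
next
  case (Suc k)
  let ?P = "fst (run r k)" and ?y = "snd (run r k)"
  let ?d = "pick rk x0 (CL m n H (Suc k)) ?y"
  have IH: "?P \<in> G" "?y = ?P *\<^sub>v r" using Suc by auto
  have yc: "?y \<in> carrier_vec (m*n)" using mult_mat_vec_carrier[OF G_carrier[OF IH(1)] r] IH(2) by simp
  have k1: "1 \<le> Suc k" "Suc k \<le> 2*n - 1" using Suc.prems by auto
  have dG: "?d \<in> G" using pick_props(1)[OF CL_props(2,3,1)[OF k1] yc] CL_props(1)[OF k1] by blast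
  have "?d *\<^sub>v ?y = (?d * ?P) *\<^sub>v r"
    using assoc_mult_mat_vec[OF G_carrier[OF dG] G_carrier[OF IH(1)] r] IH(2) by simp
  then show ?case unfolding run_step fst_conv snd_conv using G_mult[OF dG IH(1)] by simp
qed

end


lemma sum_two:
  assumes "finite A" "a \<in> A" "b \<in> A" "a \<noteq> b" "\<And>c. c \<in> A \<Longrightarrow> c \<noteq> a \<Longrightarrow> c \<noteq> b \<Longrightarrow> f c = 0"
  shows "sum f A = f a + f b"
proof -
  have "sum f A = sum f {a,b}" by (rule sum.mono_neutral_right) (use assms in auto)
  then show ?thesis using assms(4) by simp
qed

lemma rearr:
  fixes u b :: "nat \<Rightarrow> real"
  assumes "\<rho> permutes {..<n}" "\<forall>i j. i \<le> j \<longrightarrow> j < n \<longrightarrow> u i \<le> u j"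
    "\<forall>i j. i \<le> j \<longrightarrow> j < n \<longrightarrow> b i \<le> b j"
  shows "(\<Sum>j<n. u j * b (\<rho> j)) \<le> (\<Sum>j<n. u j * b j)"
  using assms
proof (induction n arbitrary: \<rho>)
  case 0 then show ?case by simp
next
  case (Suc n)
  have rho: "\<rho> permutes {..<Suc n}" by fact
  define t where "t = inv_into UNIV \<rho> n"
  have tn: "\<rho> t = n" unfolding t_def using rho by (simp add: permutes_inverses)
  have tlt: "t < Suc n" unfolding t_def using rho permutes_inv[OF rho]
    by (metis lessI lessThan_iff permutes_in_image)
  define s where "s = Transposition.transpose t n"
  have sp: "s permutes {..<Suc n}" unfolding s_def using tlt by (intro permutes_swap_id) auto
  define \<rho>' where "\<rho>' = \<rho> \<circ> s"
  have rp: "\<rho>' permutes {..<Suc n}" unfolding \<rho>'_def using sp rho by (rule permutes_compose)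
  have rn: "\<rho>' n = n" unfolding \<rho>'_def s_def using tn by simp
  have rp': "\<rho>' permutes {..<n}"
  proof -
    have "\<forall>x. x \<notin> {..<n} \<longrightarrow> \<rho>' x = x"
      using rp rn unfolding permutes_def by (metis lessThan_iff less_SucE)
    moreover have "\<forall>y. \<exists>!x. \<rho>' x = y" using rp unfolding permutes_def by blast
    ultimately show ?thesis unfolding permutes_def by blast
  qed
  define B where "B j = b (\<rho>' j)" for j
  have "(\<Sum>j<Suc n. u j * b (\<rho> j)) = (\<Sum>j<Suc n. u (s j) * b (\<rho> (s j)))"
    using sum.reindex_bij_betw[OF permutes_imp_bij[OF sp], of "\<lambda>j. u j * b (\<rho> j)"] by simp
  also have "\<dots> = (\<Sum>j<Suc n. u (s j) * B j)" unfolding B_def \<rho>'_def by simp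
  also have "\<dots> \<le> (\<Sum>j<Suc n. u j * B j)"
  proof (cases "t = n")
    case True
    then have "s = id" unfolding s_def by simp
    then show ?thesis by simp
  next
    case False
    have "(\<Sum>j<Suc n. u j * B j) - (\<Sum>j<Suc n. u (s j) * B j) = (\<Sum>j<Suc n. (u j - u (s j)) * B j)"
      by (simp add: sum_subtractf left_diff_distrib)
    also have "\<dots> = (u t - u (s t)) * B t + (u n - u (s n)) * B n"
      by (rule sum_two) (use tlt False in \<open>auto simp: s_def\<close>)
    also have "\<dots> = (u n - u t) * (B n - B t)"
      unfolding s_def by (simp add: algebra_simps)
    also have "\<dots> \<ge> 0"
    proof -
      have "u t \<le> u n" using Suc.prems(2) tlt by auto
      moreover have "B t \<le> B n"
      proof -
        have "B t = b (\<rho> n)" unfolding B_def \<rho>'_def s_def by simp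
        moreover have "\<rho> n < Suc n" using rho by (metis lessI lessThan_iff permutes_in_image)
        ultimately show ?thesis unfolding B_def using rn Suc.prems(3) by auto
      qed
      ultimately show ?thesis by simp
    qed
    finally show ?thesis by simp
  qed
  also have "\<dots> = (\<Sum>j<n. u j * b (\<rho>' j)) + u n * b n" unfolding B_def using rn by simp
  also have "\<dots> \<le> (\<Sum>j<n. u j * b j) + u n * b n"
    using Suc.IH[OF rp'] Suc.prems(2,3) by auto
  also have "\<dots> = (\<Sum>j<Suc n. u j * b j)" by simp
  finally show ?case .
qed

lemma sort_step:
  fixes \<alpha> u :: "nat \<Rightarrow> real"
  assumes ln: "l < n" and jl: "j \<le> l" and um: "\<forall>i j. i < j \<and> j < n \<longrightarrow> u i < u j"
    and opt: "\<forall>j'\<le>l. (\<Sum>c<n. u (cyc j' l c) * \<alpha> c) \<le> (\<Sum>c<n. u (cyc j l c) * \<alpha> c)"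
  shows "0 < j \<Longrightarrow> \<alpha> (j-1) \<le> \<alpha> l" and "j < l \<Longrightarrow> \<alpha> l \<le> \<alpha> j"
proof -
  assume j0: "0 < j"
  have "0 \<le> (\<Sum>c<n. u (cyc j l c) * \<alpha> c) - (\<Sum>c<n. u (cyc (j-1) l c) * \<alpha> c)"
    using opt jl by auto
  also have "\<dots> = (\<Sum>c<n. (u (cyc j l c) - u (cyc (j-1) l c)) * \<alpha> c)"
    by (simp add: sum_subtractf left_diff_distrib)
  also have "\<dots> = (u (cyc j l (j-1)) - u (cyc (j-1) l (j-1))) * \<alpha> (j-1) + (u (cyc j l l) - u (cyc (j-1) l l)) * \<alpha> l"
    by (rule sum_two) (use ln jl j0 in \<open>auto simp: cyc_def\<close>)
  also have "\<dots> = (u j - u (j-1)) * (\<alpha> l - \<alpha> (j-1))"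
  proof -
    have "cyc j l (j-1) = j-1" "cyc (j-1) l (j-1) = j" "cyc j l l = j" "cyc (j-1) l l = j-1"
      using j0 jl by (auto simp: cyc_def)
    then show ?thesis by (simp add: algebra_simps)
  qed
  finally have "0 \<le> (u j - u (j-1)) * (\<alpha> l - \<alpha> (j-1))" .
  moreover have "u (j-1) < u j" using um j0 jl ln by auto
  ultimately show "\<alpha> (j-1) \<le> \<alpha> l" by (simp add: zero_le_mult_iff)
next
  assume jl': "j < l"
  have "0 \<le> (\<Sum>c<n. u (cyc j l c) * \<alpha> c) - (\<Sum>c<n. u (cyc (j+1) l c) * \<alpha> c)"
    using opt jl' by auto
  also have "\<dots> = (\<Sum>c<n. (u (cyc j l c) - u (cyc (j+1) l c)) * \<alpha> c)"
    by (simp add: sum_subtractf left_diff_distrib)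
  also have "\<dots> = (u (cyc j l j) - u (cyc (j+1) l j)) * \<alpha> j + (u (cyc j l l) - u (cyc (j+1) l l)) * \<alpha> l"
    by (rule sum_two) (use ln jl' in \<open>auto simp: cyc_def\<close>)
  also have "\<dots> = (u (j+1) - u j) * (\<alpha> j - \<alpha> l)"
    using jl' by (simp add: cyc_def algebra_simps)
  finally have "0 \<le> (u (j+1) - u j) * (\<alpha> j - \<alpha> l)" .
  moreover have "u j < u (j+1)" using um jl' ln by auto
  ultimately show "\<alpha> l \<le> \<alpha> j" by (simp add: zero_le_mult_iff)
qed

lemma sorted_after:
  fixes \<alpha> :: "nat \<Rightarrow> real"
  assumes srt: "\<forall>a b. a \<le> b \<longrightarrow> b < l \<longrightarrow> \<alpha> a \<le> \<alpha> b" and jl: "j \<le> l"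
    and h1: "0 < j \<Longrightarrow> \<alpha> (j-1) \<le> \<alpha> l" and h2: "j < l \<Longrightarrow> \<alpha> l \<le> \<alpha> j"
    and p: "p \<le> l" and p': "p' \<le> l" and le: "cyc j l p \<le> cyc j l p'"
  shows "\<alpha> p \<le> \<alpha> p'"
proof (cases "p = l")
  case True
  show ?thesis
  proof (cases "p' = l")
    case True then show ?thesis using \<open>p = l\<close> by simp
  next
    case False
    then have "p' < l" using p' by simp
    have "j \<le> cyc j l p'" using le True by (simp add: cyc_def)
    then have "j \<le> p'" using \<open>p' < l\<close> by (auto simp: cyc_def split: if_splits)
    then have "j < l" using \<open>p' < l\<close> by simp
    then show ?thesis using h2 srt \<open>j \<le> p'\<close> \<open>p' < l\<close> True by (meson order_trans)
  qed
next
  case False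
  then have pl: "p < l" using p by simp
  show ?thesis
  proof (cases "p' = l")
    case True
    have "cyc j l p \<le> j" using le True by (simp add: cyc_def)
    then have "p < j" using pl by (auto simp: cyc_def split: if_splits)
    then have "p \<le> j - 1" "j - 1 < l" "0 < j" using jl by auto
    then show ?thesis using h1 srt True by (meson order_trans)
  next
    case False
    then have "p' < l" using p' by simp
    have "p \<le> p'" using le pl \<open>p' < l\<close> by (auto simp: cyc_def split: if_splits)
    then show ?thesis using srt \<open>p' < l\<close> by blast
  qed
qed



context ctx begin

definition al :: "complex vec \<Rightarrow> nat \<Rightarrow> real" where "al y p = ipr (blk m y p)"
definition aligned :: "complex vec \<Rightarrow> nat \<Rightarrow> bool" where
  "aligned y p = (\<forall>h\<in>H. ipr (h *\<^sub>v blk m y p) \<le> ipr (blk m y p))"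

lemma slot_step:
  assumes l: "l < n" and y: "y \<in> carrier_vec (m*n)"
    and Ce: "C = {blockmat m n id (\<lambda>i. if i = l then h else 1\<^sub>m m) | h. h \<in> H}"
    and fin: "finite C" and ne: "C \<noteq> {}" and sub: "C \<subseteq> G"
  shows "\<forall>p<n. p \<noteq> l \<longrightarrow> blk m (pick rk x0 C y *\<^sub>v y) p = blk m y p"
    and "aligned (pick rk x0 C y *\<^sub>v y) l"
proof -
  define hsf :: "complex mat \<Rightarrow> nat \<Rightarrow> complex mat" where "hsf h = (\<lambda>i. if i = l then h else 1\<^sub>m m)" for h
  have hsfc: "\<forall>c<n. hsf h c \<in> carrier_mat m m" if "h \<in> H" for h
    using that Hc unfolding hsf_def by auto
  define d where "d = pick rk x0 C y"
  have "d \<in> C" unfolding d_def by (rule pick_props(1)[OF fin ne sub y])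
  then obtain h0 where h0: "h0 \<in> H" "d = blockmat m n id (hsf h0)" unfolding Ce hsf_def by auto
  have idp: "id permutes {..<n}" by (rule permutes_id)
  have blkd: "blk m (d *\<^sub>v y) p = hsf h0 p *\<^sub>v blk m y p" if "p < n" for p
    using mult_blk[OF idp that hsfc[OF h0(1)] y] h0(2) by simp
  show "\<forall>p<n. p \<noteq> l \<longrightarrow> blk m (pick rk x0 C y *\<^sub>v y) p = blk m y p"
    using blkd unfolding d_def[symmetric] hsf_def by simp
  have scf: "sc (blockmat m n id (hsf h) *\<^sub>v y) = u l * ipr (h *\<^sub>v blk m y l) + (\<Sum>c\<in>{..<n}-{l}. u c * ipr (blk m y c))"
    if "h \<in> H" for h
  proof -
    have "sc (blockmat m n id (hsf h) *\<^sub>v y) = (\<Sum>c<n. u c * ipr (hsf h c *\<^sub>v blk m y c))"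
      using sc_blockmat[OF idp hsfc[OF that] y] by simp
    also have "\<dots> = u l * ipr (hsf h l *\<^sub>v blk m y l) + (\<Sum>c\<in>{..<n}-{l}. u c * ipr (hsf h c *\<^sub>v blk m y c))"
      by (rule sum.remove) (use l in auto)
    also have "\<dots> = u l * ipr (h *\<^sub>v blk m y l) + (\<Sum>c\<in>{..<n}-{l}. u c * ipr (blk m y c))"
      unfolding hsf_def by (auto intro!: sum.cong)
    finally show ?thesis .
  qed
  have opt: "ipr (h *\<^sub>v blk m y l) \<le> ipr (h0 *\<^sub>v blk m y l)" if h: "h \<in> H" for h
  proof -
    have "blockmat m n id (hsf h) \<in> C" unfolding Ce hsf_def using h by auto
    then have "sc (blockmat m n id (hsf h) *\<^sub>v y) \<le> sc (d *\<^sub>v y)"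
      using pick_props(2)[OF fin ne sub y] unfolding d_def by blast
    then have "u l * ipr (h *\<^sub>v blk m y l) \<le> u l * ipr (h0 *\<^sub>v blk m y l)"
      using scf[OF h] scf[OF h0(1)] h0(2) by simp
    then show ?thesis using u_pos[OF l] by simp
  qed
  show "aligned (pick rk x0 C y *\<^sub>v y) l" unfolding aligned_def d_def[symmetric]
  proof
    fix h assume h: "h \<in> H"
    have e: "blk m (d *\<^sub>v y) l = h0 *\<^sub>v blk m y l" using blkd[OF l] unfolding hsf_def by simp
    have "h *\<^sub>v (h0 *\<^sub>v blk m y l) = (h * h0) *\<^sub>v blk m y l"
      using assoc_mult_mat_vec[OF Hc[OF h] Hc[OF h0(1)] blk_carrier] by simp
    moreover have "h * h0 \<in> H" using mulH h h0(1) by blast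
    ultimately show "ipr (h *\<^sub>v blk m (d *\<^sub>v y) l) \<le> ipr (blk m (d *\<^sub>v y) l)"
      unfolding e using opt by simp
  qed
qed

lemma cyc_step:
  assumes l: "l < n" and y: "y \<in> carrier_vec (m*n)"
    and Ce: "C = {blockmat m n (cyc j l) (\<lambda>_. 1\<^sub>m m) | j. j \<le> l}"
    and fin: "finite C" and ne: "C \<noteq> {}" and sub: "C \<subseteq> G"
  shows "\<exists>j\<le>l. (\<forall>p<n. blk m (pick rk x0 C y *\<^sub>v y) (cyc j l p) = blk m y p) \<and>
      (\<forall>j'\<le>l. (\<Sum>c<n. u (cyc j' l c) * al y c) \<le> (\<Sum>c<n. u (cyc j l c) * al y c))"
proof -
  define d where "d = pick rk x0 C y"
  have "d \<in> C" unfolding d_def by (rule pick_props(1)[OF fin ne sub y])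
  then obtain j where j: "j \<le> l" "d = blockmat m n (cyc j l) (\<lambda>_. 1\<^sub>m m)" unfolding Ce by auto
  have onec: "\<forall>c<n. (\<lambda>_. 1\<^sub>m m) c \<in> carrier_mat m m" by simp
  have scf: "sc (blockmat m n (cyc j' l) (\<lambda>_. 1\<^sub>m m) *\<^sub>v y) = (\<Sum>c<n. u (cyc j' l c) * al y c)"
    if "j' \<le> l" for j'
    using sc_blockmat[OF cyc_permutes[OF that l] onec y] by (simp add: al_def)
  have "\<forall>p<n. blk m (d *\<^sub>v y) (cyc j l p) = blk m y p"
    using mult_blk[OF cyc_permutes[OF j(1) l] _ onec y] j(2) by simp
  moreover have "\<forall>j'\<le>l. (\<Sum>c<n. u (cyc j' l c) * al y c) \<le> (\<Sum>c<n. u (cyc j l c) * al y c)"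
  proof (intro allI impI)
    fix j' assume j': "j' \<le> l"
    have "blockmat m n (cyc j' l) (\<lambda>_. 1\<^sub>m m) \<in> C" unfolding Ce using j' by auto
    then have "sc (blockmat m n (cyc j' l) (\<lambda>_. 1\<^sub>m m) *\<^sub>v y) \<le> sc (d *\<^sub>v y)"
      using pick_props(2)[OF fin ne sub y] unfolding d_def by blast
    then show "(\<Sum>c<n. u (cyc j' l c) * al y c) \<le> (\<Sum>c<n. u (cyc j l c) * al y c)"
      using scf[OF j'] scf[OF j(1)] j(2) by simp
  qed
  ultimately show ?thesis using j(1) unfolding d_def by blast
qed

definition Inv :: "nat \<Rightarrow> complex vec \<Rightarrow> bool" where
  "Inv k y = ((\<forall>p \<le> k div 2. aligned y p) \<and> (\<forall>a b. a \<le> b \<longrightarrow> b \<le> (k-1) div 2 \<longrightarrow> al y a \<le> al y b))"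

lemma run_carrier: "r \<in> carrier_vec (m*n) \<Longrightarrow> k \<le> 2*n-1 \<Longrightarrow> snd (run r k) \<in> carrier_vec (m*n)"
  using run_G[of r k] G_carrier by (metis mult_mat_vec_carrier)

lemma inv_run: assumes r: "r \<in> carrier_vec (m*n)"
  shows "1 \<le> k \<Longrightarrow> k \<le> 2*n - 1 \<Longrightarrow> Inv k (snd (run r k))"
proof (induction k)
  case 0 then show ?case by simp
next
  case (Suc k)
  let ?y = "snd (run r k)"
  let ?C = "CL m n H (Suc k)"
  have k1: "1 \<le> Suc k" "Suc k \<le> 2*n - 1" using Suc.prems by auto
  have yc: "?y \<in> carrier_vec (m*n)" using run_carrier[OF r] k1 by simp
  have Cp: "finite ?C" "?C \<noteq> {}" "?C \<subseteq> G" using CL_props[OF k1] by auto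
  have ye: "snd (run r (Suc k)) = pick rk x0 ?C ?y *\<^sub>v ?y" unfolding run_step by simp
  show ?case
  proof (cases "Suc k = 1 \<or> even (Suc k)")
    case True
    define l where "l = Suc k div 2"
    have ln: "l < n" unfolding l_def using k1 by auto
    have Ce: "?C = {blockmat m n id (\<lambda>i. if i = l then h else 1\<^sub>m m) | h. h \<in> H}"
      unfolding l_def by (rule CL_slot[OF True])
    note S = slot_step[OF ln yc Ce Cp]
    show ?thesis
    proof (cases "k = 0")
      case True
      then have "l = 0" unfolding l_def by simp
      then show ?thesis unfolding Inv_def ye using S(2) True by auto
    next
      case False
      then have IH: "Inv k ?y" using Suc.IH k1 by simp
      have ev: "even (Suc k)" using True False by auto
      have "odd k" using ev by simp
      then obtain a where a: "k = 2*a+1" by (rule oddE)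
      have kd: "k div 2 = l - 1" "(k - 1) div 2 = l - 1" "Suc k div 2 = l" "(Suc k - 1) div 2 = l - 1"
        unfolding l_def a by auto
      have l1: "1 \<le> l" unfolding l_def a by auto
      have same: "blk m (snd (run r (Suc k))) p = blk m ?y p" if "p < l" for p
        using S(1) that ln unfolding ye by auto
      show ?thesis unfolding Inv_def
      proof (intro conjI allI impI)
        fix p assume p: "p \<le> Suc k div 2"
        show "aligned (snd (run r (Suc k))) p"
        proof (cases "p = l")
          case True then show ?thesis using S(2) ye by simp
        next
          case False
          then have "p < l" "p \<le> k div 2" using p kd l1 by auto
          then show ?thesis using IH same[of p] unfolding Inv_def aligned_def by simp
        qed
      next
        fix a b assume ab: "a \<le> b" "b \<le> (Suc k - 1) div 2"
        then have "b < l" "a < l" using kd l1 by auto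
        then show "al (snd (run r (Suc k))) a \<le> al (snd (run r (Suc k))) b"
          using IH ab kd same unfolding Inv_def al_def by auto
      qed
    qed
  next
    case False
    then have od: "odd (Suc k)" and k0: "k \<noteq> 0" by auto
    define l where "l = Suc k div 2"
    have ln: "l < n" unfolding l_def using k1 by auto
    have "even k" using od by simp
    then obtain a where a: "k = 2*a" by (rule evenE)
    have a0: "a \<ge> 1" using a k0 by simp
    have kd: "k div 2 = l" "(k - 1) div 2 = l - 1" "Suc k div 2 = l" "(Suc k - 1) div 2 = l"
      unfolding l_def a using a0 by auto
    have l1: "1 \<le> l" unfolding l_def a using a0 by auto
    have IH: "Inv k ?y" using Suc.IH k1 k0 by simp
    have Ce: "?C = {blockmat m n (cyc j l) (\<lambda>_. 1\<^sub>m m) | j. j \<le> l}"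
      unfolding l_def by (rule CL_cyc) (use False in auto)
    obtain j where j: "j \<le> l" and bl: "\<forall>p<n. blk m (snd (run r (Suc k))) (cyc j l p) = blk m ?y p"
      and opt: "\<forall>j'\<le>l. (\<Sum>c<n. u (cyc j' l c) * al ?y c) \<le> (\<Sum>c<n. u (cyc j l c) * al ?y c)"
      using cyc_step[OF ln yc Ce Cp] unfolding ye by blast
    have srt: "\<forall>a b. a \<le> b \<longrightarrow> b < l \<longrightarrow> al ?y a \<le> al ?y b"
      using IH kd l1 unfolding Inv_def by auto
    note h12 = sort_step[OF ln j umono opt]
    have mono: "al ?y p \<le> al ?y p'" if "p \<le> l" "p' \<le> l" "cyc j l p \<le> cyc j l p'" for p p'
      by (rule sorted_after[OF srt j h12 that])
    show ?thesis unfolding Inv_def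
    proof (intro conjI allI impI)
      fix q assume q: "q \<le> Suc k div 2"
      obtain p where p: "p \<le> l" "cyc j l p = q" using cyc_surj[of q l j] q kd j by auto
      have "aligned ?y p" using IH p kd unfolding Inv_def by auto
      then show "aligned (snd (run r (Suc k))) q"
        using bl p ln unfolding aligned_def by (metis le_less_trans)
    next
      fix a b assume ab: "a \<le> b" "b \<le> (Suc k - 1) div 2"
      obtain p where p: "p \<le> l" "cyc j l p = a" using cyc_surj[of a l j] ab kd j by auto
      obtain p' where p': "p' \<le> l" "cyc j l p' = b" using cyc_surj[of b l j] ab kd j by auto
      have "al ?y p \<le> al ?y p'" using mono[OF p(1) p'(1)] p p' ab by simp
      then show "al (snd (run r (Suc k))) a \<le> al (snd (run r (Suc k))) b"
        using bl p p' ln unfolding al_def by (metis le_less_trans)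
    qed
  qed
qed

lemma opt_final: assumes r: "r \<in> carrier_vec (m*n)" and Q: "Q \<in> G"
  shows "sc (Q *\<^sub>v r) \<le> sc (snd (run r (2*n-1)))"
proof -
  define P where "P = fst (run r (2*n-1))"
  define y where "y = snd (run r (2*n-1))"
  have PG: "P \<in> G" and yP: "y = P *\<^sub>v r" using run_G[OF r, of "2*n-1"] unfolding P_def y_def by auto
  have yc: "y \<in> carrier_vec (m*n)" using yP G_carrier[OF PG] r by simp
  have inv: "Inv (2*n-1) y" unfolding y_def by (rule inv_run[OF r]) (use n1 in auto)
  have nd: "(2*n-1) div 2 = n - 1" "(2*n-1-1) div 2 = n - 1" using n1 by auto
  have algn: "\<forall>c<n. aligned y c" using inv nd unfolding Inv_def by auto
  have srt: "\<forall>a b. a \<le> b \<longrightarrow> b < n \<longrightarrow> al y a \<le> al y b" using inv nd unfolding Inv_def by auto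
  define Q' where "Q' = Q * mat_adjoint P"
  have Q'G: "Q' \<in> G" unfolding Q'_def using G_mult[OF Q G_adj_unit(1)[OF PG]] .
  have Pc: "P \<in> carrier_mat (m*n) (m*n)" and Qc: "Q \<in> carrier_mat (m*n) (m*n)" using PG Q G_carrier by auto
  have Ac: "mat_adjoint P \<in> carrier_mat (m*n) (m*n)" using Pc by auto
  have "Q' *\<^sub>v y = (Q' * P) *\<^sub>v r" unfolding yP using assoc_mult_mat_vec[OF _ Pc r, of Q' "m*n"] Q'G G_carrier by simp
  also have "Q' * P = Q * (mat_adjoint P * P)" unfolding Q'_def using assoc_mult_mat[OF Qc Ac Pc] .
  also have "\<dots> = Q" using G_adj_unit(2)[OF PG] Qc by simp
  finally have QQ: "Q *\<^sub>v r = Q' *\<^sub>v y" by simp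
  obtain \<sigma> hs where sh: "Q' = blockmat m n \<sigma> hs" "\<sigma> permutes {..<n}" "\<forall>j<n. hs j \<in> H"
    using GE[OF Q'G] by blast
  have hsc: "\<forall>c<n. hs c \<in> carrier_mat m m" using sh(3) Hc by auto
  let ?i = "inv_into UNIV \<sigma>"
  have "sc (Q *\<^sub>v r) = (\<Sum>c<n. u (\<sigma> c) * ipr (hs c *\<^sub>v blk m y c))"
    unfolding QQ sh(1) by (rule sc_blockmat[OF sh(2) hsc yc])
  also have "\<dots> \<le> (\<Sum>c<n. u (\<sigma> c) * al y c)"
  proof (rule sum_mono)
    fix c assume c: "c \<in> {..<n}"
    have "\<sigma> c < n" using sh(2) c by (metis lessThan_iff permutes_in_image)
    then have "0 \<le> u (\<sigma> c)" using u_pos by (simp add: less_imp_le)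
    moreover have "ipr (hs c *\<^sub>v blk m y c) \<le> al y c"
      using algn sh(3) c unfolding aligned_def al_def by auto
    ultimately show "u (\<sigma> c) * ipr (hs c *\<^sub>v blk m y c) \<le> u (\<sigma> c) * al y c"
      by (simp add: mult_left_mono)
  qed
  also have "\<dots> = (\<Sum>p<n. u p * al y (?i p))"
  proof -
    have "(\<Sum>p<n. u p * al y (?i p)) = (\<Sum>c<n. u (\<sigma> c) * al y (?i (\<sigma> c)))"
      using sum.reindex_bij_betw[OF permutes_imp_bij[OF sh(2)], of "\<lambda>p. u p * al y (?i p)"] by simp
    also have "\<dots> = (\<Sum>c<n. u (\<sigma> c) * al y c)" using sh(2) by (simp add: permutes_inverses)
    finally show ?thesis by simp
  qed
  also have "\<dots> \<le> (\<Sum>p<n. u p * al y p)"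
    by (rule rearr[OF permutes_inv[OF sh(2)]]) (use u_mono srt in auto)
  also have "\<dots> = sc y" using sc_blocks[OF yc] unfolding al_def by simp
  finally show ?thesis unfolding y_def .
qed

lemma shift_norm: assumes Q: "Q \<in> G" and r: "r \<in> carrier_vec (m*n)"
  shows "vnorm (r - matinv (m*n) Q *\<^sub>v x0) = vnorm (Q *\<^sub>v r - x0)"
proof -
  have Qc: "Q \<in> carrier_mat (m*n) (m*n)" using G_carrier Q .
  have Ac: "mat_adjoint Q \<in> carrier_mat (m*n) (m*n)" using Qc by auto
  have ax: "mat_adjoint Q *\<^sub>v x0 \<in> carrier_vec (m*n)" using Ac x0_carrier by simp
  have "Q *\<^sub>v (r - mat_adjoint Q *\<^sub>v x0) = Q *\<^sub>v r - Q *\<^sub>v (mat_adjoint Q *\<^sub>v x0)"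
    by (rule mult_minus_distrib_mat_vec[OF Qc r ax])
  also have "Q *\<^sub>v (mat_adjoint Q *\<^sub>v x0) = (Q * mat_adjoint Q) *\<^sub>v x0"
    using assoc_mult_mat_vec[OF Qc Ac x0_carrier] by simp
  also have "\<dots> = x0" using G_adj_unit(3)[OF Q] x0_carrier by simp
  finally have e: "Q *\<^sub>v (r - mat_adjoint Q *\<^sub>v x0) = Q *\<^sub>v r - x0" .
  have "vnorm (r - mat_adjoint Q *\<^sub>v x0) = vnorm (Q *\<^sub>v (r - mat_adjoint Q *\<^sub>v x0))"
    using G_norm[OF Q] r ax by simp
  then show ?thesis unfolding G_matinv[OF Q] e .
qed

lemma main: "decodes_robustly m n H rk x0"
  unfolding decodes_robustly_def
proof (intro ballI impI)
  fix g r assume g: "g \<in> G" and r: "r \<in> carrier_vec (m*n)"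
    and hyp: "\<forall>h\<in>G. h \<notin> (\<lambda>s. s * g) ` Stab m n H x0 \<longrightarrow>
            vnorm (r - matinv (m*n) g *\<^sub>v x0) < vnorm (r - matinv (m*n) h *\<^sub>v x0)"
  define P where "P = decode m n H rk x0 r"
  have Pe: "P = fst (run r (2*n-1))" unfolding P_def decode_def by simp
  have PG: "P \<in> G" and yP: "snd (run r (2*n-1)) = P *\<^sub>v r" using run_G[OF r, of "2*n-1"] Pe by auto
  show "decode m n H rk x0 r \<in> (\<lambda>s. s * g) ` Stab m n H x0"
  proof (rule ccontr)
    assume "decode m n H rk x0 r \<notin> (\<lambda>s. s * g) ` Stab m n H x0"
    then have "vnorm (r - matinv (m*n) g *\<^sub>v x0) < vnorm (r - matinv (m*n) P *\<^sub>v x0)"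
      using hyp PG unfolding P_def by blast
    then have lt: "vnorm (g *\<^sub>v r - x0) < vnorm (P *\<^sub>v r - x0)"
      unfolding shift_norm[OF g r] shift_norm[OF PG r] .
    have gc: "g *\<^sub>v r \<in> carrier_vec (m*n)" using G_carrier[OF g] r by simp
    have pc: "P *\<^sub>v r \<in> carrier_vec (m*n)" using G_carrier[OF PG] r by simp
    have "(vnorm (g *\<^sub>v r - x0))\<^sup>2 < (vnorm (P *\<^sub>v r - x0))\<^sup>2"
      using lt vnorm_nonneg by (simp add: power_strict_mono)
    then have "sc (P *\<^sub>v r) < sc (g *\<^sub>v r)"
      unfolding dist_formula[OF gc] dist_formula[OF pc] G_norm[OF g r] G_norm[OF PG r] by simp
    moreover have "sc (g *\<^sub>v r) \<le> sc (P *\<^sub>v r)" using opt_final[OF r g] yP by simp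
    ultimately show False by simp
  qed
qed

end


theorem mainTheorem14:
  fixes m n :: nat and H :: "complex mat set" and v0 :: "complex vec"
    and u :: "nat \<Rightarrow> real" and rk :: "complex mat \<Rightarrow> nat"
  assumes "m \<ge> 1" and "n \<ge> 1"
    and "finite H" and "H \<subseteq> carrier_mat m m"
    and "1\<^sub>m m \<in> H"
    and "\<forall>a\<in>H. \<forall>b\<in>H. a * b \<in> H"
    and "\<forall>a\<in>H. \<exists>b\<in>H. a * b = 1\<^sub>m m \<and> b * a = 1\<^sub>m m"
    and "\<forall>h\<in>H. h * mat_adjoint h = 1\<^sub>m m"
    and "v0 \<in> carrier_vec m" and "vnorm v0 = 1"
    and "\<forall>h\<in>H. h \<noteq> 1\<^sub>m m \<longrightarrow> vnorm (1\<^sub>m m *\<^sub>v v0 - v0) < vnorm (h *\<^sub>v v0 - v0)"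
    and "0 < u 0" and "\<forall>i j. i < j \<and> j < n \<longrightarrow> u i < u j"
    and "vnorm (x0vec m n u v0) = 1"
    and "inj_on rk (Gset m n H)"
  shows "decodes_robustly m n H rk (x0vec m n u v0)"
proof -
  interpret ctx m n H v0 u rk
    by (rule ctx.intro[OF assms(1-9) assms(12,13,15)])
  show ?thesis by (rule main)
qed

end
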